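(* Consider the family of single-server discrete-time queues described in the context, indexed by $\epsilon\in(0,\mu)$. Let $\bar q^{(\epsilon)}$ be a random variable distributed according to the stationary distribution of $\{q^{(\epsilon)}(t)\}_{t\ge0}$. Let $Z^{(\epsilon)}$ be an exponential random variable with rate $\frac{2}{(\sigma_a^{(\epsilon)})^2+\sigma_s^2}$, i.e. with mean $\frac{(\sigma_a^{(\epsilon)})^2+\sigma_s^2}{2}$. Then there exists a constant $K<\infty$, independent of $\epsilon$, such that for every $\epsilon\in(0,\mu)$, $$d_W\big(\epsilon\,\bar q^{(\epsilon)},\,Z^{(\epsilon)}\big)\le K\epsilon .$$
   Context: Wasserstein distance: for real-valued random variables $X,Y$, $d_W(X,Y)=\sup_{h\in \mathrm{Lip}(1)}|\mathbb E[h(X)]-\mathbb E[h(Y)]|$, where $\mathrm{Lip}(1)$ is the set of functions $h:\mathbb R\to\mathbb R$ with $|h(x)-h(y)|\le|x-y|$. Single-server queue: time is slotted. The queue length evolves as $q(t+1)=q(t)+a(t)-s(t)+u(t)$, where $u(t)=\max(s(t)-a(t)-q(t),0)$ is the unused service, and $q(0)$ is a nonnegative integer. The arrivals $\{a(t)\}_t$ are i.i.d. nonnegative integer-valued, the services $\{s(t)\}_t$ are i.i.d. nonnegative integer-valued, and the arrival and service sequences are independent of each other and of the past queue lengths. The service law is fixed with mean $\mu>0$ and variance $\sigma_s^2$. For each $\epsilon\in(0,\mu)$ the arrival law (denoted $a^{(\epsilon)}(t)$) has mean $\lambda^{(\epsilon)}=\mu-\epsilon$ and variance $(\sigma_a^{(\epsilon)})^2$.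 There are constants $A_{max},S_{max}<\infty$ independent of $\epsilon$ with $a^{(\epsilon)}(t)\le A_{max}$ and $s(t)\le S_{max}$ almost surely. There is a constant $c_0>0$ with $(\sigma_a^{(\epsilon)})^2+\sigma_s^2\ge c_0$ for all $\epsilon$. For each $\epsilon$ the Markov chain $\{q^{(\epsilon)}(t)\}$ is assumed to be positive recurrent with a stationary distribution. *)

theory Defs
  imports "HOL-Probability.Probability"
begin

text \<open>One step of the queue: q(t+1) = q(t) + a(t) - s(t) + u(t) with
  u(t) = max(s(t) - a(t) - q(t), 0), i.e. q(t+1) = max(q(t)+a(t)-s(t), 0),
  which is truncated subtraction on nat.\<close>
definition queue_step :: "nat pmf \<Rightarrow> nat pmf \<Rightarrow> nat \<Rightarrow> nat pmf" where
  "queue_step A S q = map_pmf (\<lambda>(x, y). q + x - y) (pair_pmf A S)"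

definition stationary_queue :: "nat pmf \<Rightarrow> nat pmf \<Rightarrow> nat pmf \<Rightarrow> bool" where
  "stationary_queue A S p \<longleftrightarrow> bind_pmf p (queue_step A S) = p"

definition wasserstein :: "real measure \<Rightarrow> real measure \<Rightarrow> ereal" where
  "wasserstein M N = (SUP h \<in> {h :: real \<Rightarrow> real. \<forall>x y. \<bar>h x - h y\<bar> \<le> \<bar>x - y\<bar>}.
      ereal \<bar>(\<integral>x. h x \<partial>M) - (\<integral>x. h x \<partial>N)\<bar>)"

end

theory Submission
  imports Defs
begin


lemma exp_dens_mom:
  assumes l: "0 < l"
  shows "has_bochner_integral lborel (\<lambda>x. exponential_density l x * x ^ i) (fact i / l ^ i)"
proof (rule has_bochner_integral_nn_integral)
  show "AE x in lborel. 0 \<le> exponential_density l x * x ^ i"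
    using l by (auto simp: exponential_density_def)
  show "(\<integral>\<^sup>+ x. ennreal (exponential_density l x * x ^ i) \<partial>lborel) = ennreal (fact i / l ^ i)"
    using nn_integral_erlang_ith_moment[OF l, of 0 i] by simp
qed (use l in auto)

definition Jx :: "real \<Rightarrow> (real \<Rightarrow> real) \<Rightarrow> real" where
  "Jx l k = (\<integral>t. exponential_density l t * k t \<partial>lborel)"

lemma Jx_int_f: "0 < l \<Longrightarrow> integrable lborel (exponential_density l)"
  using exp_dens_mom[of l 0] by (simp add: has_bochner_integral_iff)

lemma Jx_int_ft: "0 < l \<Longrightarrow> integrable lborel (\<lambda>x. exponential_density l x * x)"
  using exp_dens_mom[of l 1] by (simp add: has_bochner_integral_iff)

lemma Jx_f: "0 < l \<Longrightarrow> (\<integral>x. exponential_density l x \<partial>lborel) = 1"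
  using exp_dens_mom[of l 0] by (auto dest: has_bochner_integral_integral_eq)

lemma Jx_ft: "0 < l \<Longrightarrow> (\<integral>x. exponential_density l x * x \<partial>lborel) = 1 / l"
  using exp_dens_mom[of l 1] by (auto dest: has_bochner_integral_integral_eq)

lemma Jx_integrable:
  assumes l: "0 < l" and k: "k \<in> borel_measurable borel" and b: "\<And>t. \<bar>k t\<bar> \<le> A + B * \<bar>t\<bar>"
  shows "integrable lborel (\<lambda>t. exponential_density l t * k t)"
proof (rule Bochner_Integration.integrable_bound)
  show "integrable lborel (\<lambda>t. A * exponential_density l t + B * (exponential_density l t * t))"
    using Jx_int_f[OF l] Jx_int_ft[OF l] by auto
  show "(\<lambda>t. exponential_density l t * k t) \<in> borel_measurable lborel" using k by measurable
  show "AE t in lborel. norm (exponential_density l t * k t) \<le> norm (A * exponential_density l t + B * (exponential_density l t * t))"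
  proof (rule AE_I2)
    fix t
    have f0: "0 \<le> exponential_density l t" using l by (simp add: exponential_density_nonneg)
    have "\<bar>exponential_density l t * k t\<bar> = exponential_density l t * \<bar>k t\<bar>" using f0 by (simp add: abs_mult)
    also have "\<dots> \<le> exponential_density l t * (A + B * \<bar>t\<bar>)" using f0 b by (simp add: mult_left_mono)
    also have "\<dots> = A * exponential_density l t + B * (exponential_density l t * t)"
      by (cases "t < 0") (auto simp: exponential_density_def algebra_simps)
    finally show "norm (exponential_density l t * k t) \<le> norm (A * exponential_density l t + B * (exponential_density l t * t))"
      by simp
  qed
qed


definition lip1 :: "(real \<Rightarrow> real) \<Rightarrow> bool" where
  "lip1 k \<longleftrightarrow> (\<forall>x y. \<bar>k x - k y\<bar> \<le> \<bar>x - y\<bar>)"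

lemma lip1_borel: assumes "lip1 k" shows "k \<in> borel_measurable borel"
proof (rule borel_measurable_continuous_onI)
  show "continuous_on UNIV k"
    unfolding continuous_on_iff
  proof (intro ballI allI impI)
    fix x :: real and e :: real assume "0 < e"
    show "\<exists>d>0. \<forall>x'\<in>UNIV. dist x' x < d \<longrightarrow> dist (k x') (k x) < e"
      using \<open>0 < e\<close> assms by (intro exI[of _ e]) (auto simp: lip1_def dist_real_def intro: le_less_trans)
  qed
qed

lemma Jx_abs_bound:
  assumes l: "0 < l" and k: "k \<in> borel_measurable borel" and b: "\<And>t. \<bar>k t\<bar> \<le> A + B * \<bar>t\<bar>"
  shows "\<bar>Jx l k\<bar> \<le> A + B / l"
proof -
  have i1: "integrable lborel (\<lambda>t. exponential_density l t * k t)" by (rule Jx_integrable[OF l k b])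
  have i2: "integrable lborel (\<lambda>t. A * exponential_density l t + B * (exponential_density l t * t))"
    using Jx_int_f[OF l] Jx_int_ft[OF l] by auto
  have "\<bar>Jx l k\<bar> \<le> (\<integral>t. \<bar>exponential_density l t * k t\<bar> \<partial>lborel)"
    unfolding Jx_def by (rule integral_abs_bound)
  also have "\<dots> \<le> (\<integral>t. A * exponential_density l t + B * (exponential_density l t * t) \<partial>lborel)"
  proof (rule integral_mono)
    show "integrable lborel (\<lambda>t. \<bar>exponential_density l t * k t\<bar>)" using i1 by auto
    show "integrable lborel (\<lambda>t. A * exponential_density l t + B * (exponential_density l t * t))" by (rule i2)
    fix t
    have f0: "0 \<le> exponential_density l t" using l by (simp add: exponential_density_nonneg)
    have "\<bar>exponential_density l t * k t\<bar> = exponential_density l t * \<bar>k t\<bar>" using f0 by (simp add: abs_mult)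
    also have "\<dots> \<le> exponential_density l t * (A + B * \<bar>t\<bar>)" using f0 b by (simp add: mult_left_mono)
    also have "\<dots> = A * exponential_density l t + B * (exponential_density l t * t)"
      by (cases "t < 0") (auto simp: exponential_density_def algebra_simps)
    finally show "\<bar>exponential_density l t * k t\<bar> \<le> A * exponential_density l t + B * (exponential_density l t * t)" .
  qed
  also have "\<dots> = A + B / l"
    using Jx_int_f[OF l] Jx_int_ft[OF l] Jx_f[OF l] Jx_ft[OF l] by simp
  finally show ?thesis .
qed

lemma lip1_bound: "lip1 k \<Longrightarrow> \<bar>k t\<bar> \<le> \<bar>k 0\<bar> + 1 * \<bar>t\<bar>"
  unfolding lip1_def by (metis abs_triangle_ineq2 add.commute diff_0_right diff_le_eq mult_1 order_trans)

lemma Jx_shift: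
  assumes l: "0 < l" and k: "k \<in> borel_measurable borel" and b: "\<And>t. \<bar>k t\<bar> \<le> \<bar>t\<bar>" and d: "0 \<le> \<delta>"
  shows "\<exists>R. Jx l (\<lambda>t. k (\<delta> + t)) = exp (l * \<delta>) * (Jx l k - R) \<and> \<bar>R\<bar> \<le> l * \<delta>^2"
proof -
  let ?f = "exponential_density l"
  define R where "R = (\<integral>s. ?f s * k s * indicator {..<\<delta>} s \<partial>lborel)"
  have ik: "integrable lborel (\<lambda>t. ?f t * k t)"
    by (rule Jx_integrable[OF l k, of 0 1]) (use b in auto)
  have "integrable lborel (\<lambda>s. ?f s * (k s * indicator {..<\<delta>} s))"
  proof (rule Jx_integrable[OF l, of _ 0 1])
    show "(\<lambda>s. k s * indicator {..<\<delta>} s) \<in> borel_measurable borel" using k by measurable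
    show "\<And>t. \<bar>k t * indicator {..<\<delta>} t\<bar> \<le> 0 + 1 * \<bar>t\<bar>" using b by (auto simp: indicator_def)
  qed
  then have iR: "integrable lborel (\<lambda>s. ?f s * k s * indicator {..<\<delta>} s)" by (simp add: mult.assoc)
  have eqF: "\<And>s. ?f (s - \<delta>) * k s = exp (l * \<delta>) * (?f s * k s - ?f s * k s * indicator {..<\<delta>} s)"
  proof -
    fix s
    show "?f (s - \<delta>) * k s = exp (l * \<delta>) * (?f s * k s - ?f s * k s * indicator {..<\<delta>} s)"
    proof (cases "s < \<delta>")
      case True then show ?thesis using d by (auto simp: exponential_density_def indicator_def)
    next
      case False
      then have "exp (- (s - \<delta>) * l) = exp (l * \<delta>) * exp (- s * l)"
        by (simp add: exp_add[symmetric] algebra_simps)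
      then show ?thesis using False d by (auto simp: exponential_density_def indicator_def)
    qed
  qed
  have "Jx l (\<lambda>t. k (\<delta> + t)) = (\<integral>s. ?f (s - \<delta>) * k s \<partial>lborel)"
    unfolding Jx_def using lborel_integral_real_affine[of 1 "\<lambda>s. ?f (s - \<delta>) * k s" \<delta>] by simp
  also have "\<dots> = (\<integral>s. exp (l * \<delta>) * (?f s * k s - ?f s * k s * indicator {..<\<delta>} s) \<partial>lborel)"
    by (simp only: eqF)
  also have "\<dots> = exp (l * \<delta>) * (Jx l k - R)"
    unfolding Jx_def R_def using ik iR by simp
  finally have e1: "Jx l (\<lambda>t. k (\<delta> + t)) = exp (l * \<delta>) * (Jx l k - R)" .
  have iI: "integrable lborel (\<lambda>s. (l * \<delta>) * indicator {0..\<delta>} s :: real)"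
    by (intro integrable_mult_right integrable_real_indicator) (auto simp: emeasure_lborel_Icc_eq)
  have "\<bar>R\<bar> \<le> (\<integral>s. \<bar>?f s * k s * indicator {..<\<delta>} s\<bar> \<partial>lborel)"
    unfolding R_def by (rule integral_abs_bound)
  also have "\<dots> \<le> (\<integral>s. (l * \<delta>) * indicator {0..\<delta>} s \<partial>lborel)"
  proof (rule integral_mono)
    show "integrable lborel (\<lambda>s. \<bar>?f s * k s * indicator {..<\<delta>} s\<bar>)" using iR by auto
    show "integrable lborel (\<lambda>s. (l * \<delta>) * indicator {0..\<delta>} s :: real)" by (rule iI)
    fix s
    show "\<bar>?f s * k s * indicator {..<\<delta>} s\<bar> \<le> (l * \<delta>) * indicator {0..\<delta>} s"
    proof (cases "0 \<le> s \<and> s < \<delta>")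
      case True
      have "exp (- s * l) \<le> 1" using True l by simp
      then have f1: "\<bar>?f s\<bar> \<le> l" using True l by (auto simp: exponential_density_def)
      have "\<bar>k s\<bar> \<le> \<delta>" using b[of s] True by simp
      then have "\<bar>?f s * k s\<bar> \<le> l * \<delta>" using f1 by (simp add: abs_mult mult_mono')
      then show ?thesis using True by (simp add: indicator_def)
    next
      case False then show ?thesis using d l
        by (auto simp: indicator_def exponential_density_def)
    qed
  qed
  also have "\<dots> = l * \<delta>^2" using d by (simp add: power2_eq_square)
  finally show ?thesis using e1 by blast
qed


lemma exp_quad: assumes "0 \<le> (u::real)" shows "exp u - 1 - u \<le> u^2 * exp u"
proof -
  have "1 + (-u) \<le> exp (-u)" by (rule exp_ge_add_one_self)
  then have "exp u * (1 - u) \<le> exp u * exp (-u)" by (simp add: mult_left_mono)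
  then have a: "exp u - 1 \<le> u * exp u" by (simp add: exp_minus_inverse algebra_simps)
  then have "exp u - 1 - u \<le> u * (exp u - 1)" by (simp add: algebra_simps)
  also have "\<dots> \<le> u * (u * exp u)" using a assms by (simp add: mult_left_mono)
  finally show ?thesis by (simp add: power2_eq_square algebra_simps)
qed

definition Hf :: "real \<Rightarrow> (real \<Rightarrow> real) \<Rightarrow> real \<Rightarrow> real" where
  "Hf l h x = Jx l (\<lambda>t. h (x + t))"
definition gS :: "real \<Rightarrow> (real \<Rightarrow> real) \<Rightarrow> real \<Rightarrow> real" where
  "gS l h x = Hf l h 0 - Hf l h x"
definition psiS :: "real \<Rightarrow> (real \<Rightarrow> real) \<Rightarrow> real \<Rightarrow> real" where
  "psiS l h x = l * (h x - Hf l h x)"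

lemma lip1D: "lip1 h \<Longrightarrow> \<bar>h a - h b\<bar> \<le> \<bar>a - b\<bar>"
  unfolding lip1_def by blast

lemma lip1_shift: "lip1 h \<Longrightarrow> lip1 (\<lambda>t. h (x + t))"
  unfolding lip1_def by (metis add_diff_cancel_left)

lemma Jx_int_lip: "0 < l \<Longrightarrow> lip1 k \<Longrightarrow> integrable lborel (\<lambda>t. exponential_density l t * k t)"
  using Jx_integrable lip1_borel lip1_bound by blast

lemma Jx_const: "0 < l \<Longrightarrow> Jx l (\<lambda>_. c) = c"
  unfolding Jx_def using Jx_f[of l] Jx_int_f[of l] by simp

lemma Jx_diff: "0 < l \<Longrightarrow> integrable lborel (\<lambda>t. exponential_density l t * k1 t) \<Longrightarrow>
   integrable lborel (\<lambda>t. exponential_density l t * k2 t) \<Longrightarrow> Jx l (\<lambda>t. k1 t - k2 t) = Jx l k1 - Jx l k2"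
  unfolding Jx_def by (simp add: right_diff_distrib)

lemma lip1_const_int: "0 < l \<Longrightarrow> integrable lborel (\<lambda>t. exponential_density l t * c)"
  using Jx_int_f[of l] by simp

context
  fixes l :: real and h :: "real \<Rightarrow> real"
  assumes l: "0 < l" and h: "lip1 h"
begin

lemma ih: "integrable lborel (\<lambda>t. exponential_density l t * h (x + t))"
  using Jx_int_lip[OF l lip1_shift[OF h]] .

lemma Hf_lip: "\<bar>Hf l h x - Hf l h y\<bar> \<le> \<bar>x - y\<bar>"
proof -
  have "Hf l h x - Hf l h y = Jx l (\<lambda>t. h (x + t) - h (y + t))"
    unfolding Hf_def using Jx_diff[OF l ih ih] by simp
  also have "\<bar>\<dots>\<bar> \<le> \<bar>x - y\<bar> + 0 / l"
  proof (rule Jx_abs_bound[OF l])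
    show "(\<lambda>t. h (x + t) - h (y + t)) \<in> borel_measurable borel"
      by (intro borel_measurable_diff lip1_borel[OF lip1_shift[OF h]])
    fix t show "\<bar>h (x + t) - h (y + t)\<bar> \<le> \<bar>x - y\<bar> + 0 * \<bar>t\<bar>"
      using lip1D[OF h, of "x + t" "y + t"] by simp
  qed
  finally show ?thesis by simp
qed

lemma h_Hf: "\<bar>h x - Hf l h x\<bar> \<le> 1 / l"
proof -
  have "h x - Hf l h x = Jx l (\<lambda>t. h x - h (x + t))"
    unfolding Hf_def using Jx_diff[OF l lip1_const_int[OF l] ih] Jx_const[OF l] by simp
  also have "\<bar>\<dots>\<bar> \<le> 0 + 1 / l"
  proof (rule Jx_abs_bound[OF l])
    show "(\<lambda>t. h x - h (x + t)) \<in> borel_measurable borel"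
      by (intro borel_measurable_diff lip1_borel[OF lip1_shift[OF h]]) auto
    fix t show "\<bar>h x - h (x + t)\<bar> \<le> 0 + 1 * \<bar>t\<bar>"
      using lip1D[OF h, of x "x + t"] by simp
  qed
  finally show ?thesis by simp
qed

lemma psi_bd: "\<bar>psiS l h x\<bar> \<le> 1"
proof -
  have "\<bar>psiS l h x\<bar> = l * \<bar>h x - Hf l h x\<bar>" unfolding psiS_def using l by (simp add: abs_mult)
  also have "\<dots> \<le> l * (1 / l)" using h_Hf[of x] l by (intro mult_left_mono) auto
  finally show ?thesis using l by simp
qed

lemma psi_lip: "\<bar>psiS l h x - psiS l h y\<bar> \<le> 2 * l * \<bar>x - y\<bar>"
proof -
  have "\<bar>(h x - Hf l h x) - (h y - Hf l h y)\<bar> \<le> 2 * \<bar>x - y\<bar>"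
  proof -
    have "\<bar>h x - h y\<bar> \<le> \<bar>x - y\<bar>" using h unfolding lip1_def by blast
    then show ?thesis using Hf_lip[of x y] by (smt (verit))
  qed
  then have "l * \<bar>(h x - Hf l h x) - (h y - Hf l h y)\<bar> \<le> l * (2 * \<bar>x - y\<bar>)" using l by (simp add: mult_left_mono)
  moreover have "psiS l h x - psiS l h y = l * ((h x - Hf l h x) - (h y - Hf l h y))"
    unfolding psiS_def by (simp add: algebra_simps)
  ultimately show ?thesis using l by (simp add: abs_mult)
qed

lemma g_bd: "\<bar>gS l h x\<bar> \<le> \<bar>x\<bar>"
  using Hf_lip[of 0 x] unfolding gS_def by simp

lemma stein_id: "psiS l h x / l - gS l h x = h x - Jx l h"
  using l unfolding psiS_def gS_def Hf_def by simp

lemma taylor_fwd: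
  assumes d: "0 \<le> \<delta>" "\<delta> \<le> Dm" and lT: "l \<le> T"
  shows "\<bar>gS l h (x + \<delta>) - gS l h x - psiS l h x * \<delta>\<bar> \<le> 2 * T * exp (T * Dm) * \<delta>^2"
proof -
  define k where "k t = h (x + t) - h x" for t
  have kb: "\<bar>k t\<bar> \<le> \<bar>t\<bar>" for t using h unfolding k_def lip1_def by (metis add_diff_cancel_left')
  have km: "k \<in> borel_measurable borel" unfolding k_def
    by (intro borel_measurable_diff lip1_borel[OF lip1_shift[OF h]]) auto
  obtain R where R: "Jx l (\<lambda>t. k (\<delta> + t)) = exp (l * \<delta>) * (Jx l k - R)" "\<bar>R\<bar> \<le> l * \<delta>^2"
    using Jx_shift[OF l km kb d(1)] by blast
  have J1: "Jx l k = Hf l h x - h x"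
    unfolding k_def Hf_def using Jx_diff[OF l ih lip1_const_int[OF l]] Jx_const[OF l] by simp
  have J2: "Jx l (\<lambda>t. k (\<delta> + t)) = Hf l h (x + \<delta>) - h x"
    unfolding k_def Hf_def using Jx_diff[OF l ih[of "x + \<delta>"] lip1_const_int[OF l]] Jx_const[OF l]
    by (simp add: add.assoc)
  have Jb: "\<bar>Jx l k\<bar> \<le> 1 / l" using Jx_abs_bound[OF l km, of 0 1] kb by simp
  define u where "u = l * \<delta>"
  have u0: "0 \<le> u" using l d unfolding u_def by simp
  have "gS l h (x + \<delta>) - gS l h x - psiS l h x * \<delta> = -(Jx l (\<lambda>t. k (\<delta> + t)) - (1 + u) * Jx l k)"
    unfolding gS_def psiS_def J1 J2 u_def by (simp add: algebra_simps)
  also have "\<dots> = -((exp u - 1 - u) * Jx l k - exp u * R)" unfolding R(1) u_def by (simp add: algebra_simps)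
  finally have eq: "\<bar>gS l h (x + \<delta>) - gS l h x - psiS l h x * \<delta>\<bar> = \<bar>(exp u - 1 - u) * Jx l k - exp u * R\<bar>" by simp
  have e1: "0 \<le> exp u - 1 - u" using exp_ge_add_one_self[of u] by linarith
  have "\<bar>(exp u - 1 - u) * Jx l k\<bar> \<le> (u^2 * exp u) * (1 / l)"
    unfolding abs_mult using e1 exp_quad[OF u0] Jb by (intro mult_mono) auto
  also have "\<dots> = l * \<delta>^2 * exp u" unfolding u_def using l by (simp add: power2_eq_square)
  finally have b1: "\<bar>(exp u - 1 - u) * Jx l k\<bar> \<le> l * \<delta>^2 * exp u" .
  have b2: "\<bar>exp u * R\<bar> \<le> exp u * (l * \<delta>^2)" using R(2) by (simp add: abs_mult mult_left_mono)
  have "exp u \<le> exp (T * Dm)" unfolding u_def using l lT d by (intro exp_mono mult_mono) auto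
  moreover have "2 * l * \<delta>^2 \<le> 2 * T * \<delta>^2" using lT by (simp add: mult_right_mono)
  ultimately have b3: "(2 * l * \<delta>^2) * exp u \<le> (2 * T * \<delta>^2) * exp (T * Dm)"
    using l lT by (intro mult_mono) auto
  have "\<bar>(exp u - 1 - u) * Jx l k - exp u * R\<bar> \<le> l * \<delta>^2 * exp u + exp u * (l * \<delta>^2)"
    using b1 b2 abs_triangle_ineq4 by (smt (verit))
  also have "\<dots> = (2 * l * \<delta>^2) * exp u" by simp
  finally show ?thesis unfolding eq using b3 by (simp add: algebra_simps)
qed

lemma taylor2:
  assumes d: "\<bar>y - x\<bar> \<le> Dm" and lT: "l \<le> T"
  shows "\<bar>gS l h y - gS l h x - psiS l h x * (y - x)\<bar> \<le> (2 * T * exp (T * Dm) + 2 * T) * (y - x)^2"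
proof (cases "x \<le> y")
  case True
  have *: "0 \<le> y - x" "y - x \<le> Dm" using True d by auto
  have "0 \<le> 2 * T * (y - x)^2" using l lT by simp
  then show ?thesis using taylor_fwd[OF * lT, of x] by (simp add: algebra_simps)
next
  case False
  have *: "0 \<le> x - y" "x - y \<le> Dm" using False d by auto
  have a: "\<bar>gS l h x - gS l h y - psiS l h y * (x - y)\<bar> \<le> 2 * T * exp (T * Dm) * (x - y)^2"
    using taylor_fwd[OF * lT, of y] by simp
  have b: "\<bar>(psiS l h x - psiS l h y) * (x - y)\<bar> \<le> 2 * T * (x - y)^2"
  proof -
    have "\<bar>(psiS l h x - psiS l h y) * (x - y)\<bar> \<le> (2 * l * \<bar>x - y\<bar>) * \<bar>x - y\<bar>"
      unfolding abs_mult by (intro mult_right_mono psi_lip) auto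
    also have "\<dots> \<le> 2 * T * (x - y)^2" using lT l by (simp add: power2_eq_square mult_right_mono)
    finally show ?thesis .
  qed
  have "gS l h y - gS l h x - psiS l h x * (y - x) = -(gS l h x - gS l h y - psiS l h y * (x - y)) + (psiS l h x - psiS l h y) * (x - y)"
    by (simp add: algebra_simps)
  moreover have "(y - x)^2 = (x - y)^2" by (simp add: power2_commute)
  ultimately show ?thesis using a b abs_triangle_ineq[of "-(gS l h x - gS l h y - psiS l h y * (x - y))" "(psiS l h x - psiS l h y) * (x - y)"]
    by (simp add: algebra_simps)
qed

end


definition Tq :: "nat pmf \<Rightarrow> nat pmf \<Rightarrow> (nat \<Rightarrow> real) \<Rightarrow> nat \<Rightarrow> real" where
  "Tq A S \<phi> n = (\<integral>z. \<phi> (n + fst z - snd z) \<partial>pair_pmf A S)"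

lemma fin_pair: "finite (set_pmf A) \<Longrightarrow> finite (set_pmf S) \<Longrightarrow> finite (set_pmf (pair_pmf A S))"
  by simp

lemma int_pair: "finite (set_pmf A) \<Longrightarrow> finite (set_pmf S) \<Longrightarrow> integrable (measure_pmf (pair_pmf A S)) (f :: _ \<Rightarrow> real)"
  by (rule integrable_measure_pmf_finite) simp

lemma STAT_nn:
  assumes stat: "stationary_queue A S p" and fA: "finite (set_pmf A)" and fS: "finite (set_pmf S)"
    and nn: "\<And>n. 0 \<le> \<phi> n" and ip: "integrable (measure_pmf p) \<phi>"
  shows "integrable (measure_pmf p) (Tq A S \<phi>) \<and> (\<integral>n. Tq A S \<phi> n \<partial>p) = (\<integral>n. \<phi> n \<partial>p)"
proof -
  have Tnn: "0 \<le> Tq A S \<phi> n" for n unfolding Tq_def by (intro integral_nonneg_AE) (use nn in auto)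
  have inner: "(\<integral>\<^sup>+y. ennreal (\<phi> y) \<partial>queue_step A S n) = ennreal (Tq A S \<phi> n)" for n
  proof -
    have "(\<integral>\<^sup>+y. ennreal (\<phi> y) \<partial>queue_step A S n) = (\<integral>\<^sup>+z. ennreal (\<phi> (n + fst z - snd z)) \<partial>pair_pmf A S)"
      unfolding queue_step_def by (simp add: case_prod_beta)
    also have "\<dots> = ennreal (Tq A S \<phi> n)"
      unfolding Tq_def by (rule nn_integral_eq_integral[OF int_pair[OF fA fS]]) (use nn in auto)
    finally show ?thesis .
  qed
  have "ennreal (\<integral>n. \<phi> n \<partial>p) = (\<integral>\<^sup>+n. ennreal (\<phi> n) \<partial>p)"
    by (rule nn_integral_eq_integral[symmetric, OF ip]) (use nn in auto)
  also have "\<dots> = (\<integral>\<^sup>+n. ennreal (\<phi> n) \<partial>bind_pmf p (queue_step A S))"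
    using stat unfolding stationary_queue_def by simp
  also have "\<dots> = (\<integral>\<^sup>+n. ennreal (Tq A S \<phi> n) \<partial>p)"
    by (simp add: inner)
  finally have eq: "(\<integral>\<^sup>+n. ennreal (Tq A S \<phi> n) \<partial>p) = ennreal (\<integral>n. \<phi> n \<partial>p)" ..
  have iT: "integrable (measure_pmf p) (Tq A S \<phi>)"
    by (rule integrableI_nonneg) (use Tnn eq in auto)
  have "ennreal (\<integral>n. Tq A S \<phi> n \<partial>p) = ennreal (\<integral>n. \<phi> n \<partial>p)"
    using nn_integral_eq_integral[OF iT] Tnn eq by simp
  then have "(\<integral>n. Tq A S \<phi> n \<partial>p) = (\<integral>n. \<phi> n \<partial>p)"
    by (subst (asm) ennreal_inj) (auto intro!: integral_nonneg_AE simp: Tnn nn)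
  with iT show ?thesis by blast
qed

lemma Tq_add: "finite (set_pmf A) \<Longrightarrow> finite (set_pmf S) \<Longrightarrow> Tq A S (\<lambda>n. f n + g n) n = Tq A S f n + Tq A S g n"
  unfolding Tq_def by (rule Bochner_Integration.integral_add) (auto intro: int_pair)

lemma STAT:
  assumes stat: "stationary_queue A S p" and fA: "finite (set_pmf A)" and fS: "finite (set_pmf S)"
    and bd: "\<And>n. \<bar>\<phi> n\<bar> \<le> B n" and ip: "integrable (measure_pmf p) B"
  shows "integrable (measure_pmf p) (Tq A S \<phi>) \<and> (\<integral>n. Tq A S \<phi> n \<partial>p) = (\<integral>n. \<phi> n \<partial>p)"
proof -
  have B0: "0 \<le> B n" for n using bd[of n] by simp
  have ipB: "integrable (measure_pmf p) (\<lambda>n. \<phi> n + B n)"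
  proof (rule Bochner_Integration.integrable_bound[OF integrable_mult_right[OF ip, of 2]])
    show "AE x in measure_pmf p. norm (\<phi> x + B x) \<le> norm (2 * B x)"
    proof (rule AE_I2)
      fix x show "norm (\<phi> x + B x) \<le> norm (2 * B x)" using bd[of x] unfolding real_norm_def by (smt (verit))
    qed
  qed simp
  have iphi: "integrable (measure_pmf p) \<phi>"
  proof (rule Bochner_Integration.integrable_bound[OF ip])
    show "AE x in measure_pmf p. norm (\<phi> x) \<le> norm (B x)"
    proof (rule AE_I2)
      fix x show "norm (\<phi> x) \<le> norm (B x)" using bd[of x] unfolding real_norm_def by (smt (verit))
    qed
  qed simp
  have s1: "integrable (measure_pmf p) (Tq A S B) \<and> (\<integral>n. Tq A S B n \<partial>p) = (\<integral>n. B n \<partial>p)"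
    by (rule STAT_nn[OF stat fA fS _ ip]) (use B0 in auto)
  have s2: "integrable (measure_pmf p) (Tq A S (\<lambda>n. \<phi> n + B n)) \<and> (\<integral>n. Tq A S (\<lambda>n. \<phi> n + B n) n \<partial>p) = (\<integral>n. \<phi> n + B n \<partial>p)"
  proof (rule STAT_nn[OF stat fA fS _ ipB])
    fix n show "0 \<le> \<phi> n + B n" using bd[of n] by linarith
  qed
  have eqT: "Tq A S \<phi> n = Tq A S (\<lambda>n. \<phi> n + B n) n - Tq A S B n" for n
    using Tq_add[OF fA fS, of \<phi> B n] by simp
  have iT: "integrable (measure_pmf p) (Tq A S \<phi>)"
    unfolding eqT[abs_def] using s1 s2 by auto
  have "(\<integral>n. Tq A S \<phi> n \<partial>p) = (\<integral>n. Tq A S (\<lambda>n. \<phi> n + B n) n \<partial>p) - (\<integral>n. Tq A S B n \<partial>p)"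
    unfolding eqT using s1 s2 by (intro Bochner_Integration.integral_diff) auto
  also have "\<dots> = (\<integral>n. \<phi> n \<partial>p)" using s1 s2 iphi ip by simp
  finally show ?thesis using iT by blast
qed


lemma sum_gauss: "(\<Sum>i<m. real i) = real m * (real m - 1) / 2"
  by (induction m) (auto simp: algebra_simps)

lemma sum_block: fixes w :: "nat \<Rightarrow> real" shows "sum w {..<b + m} - sum w {..<b} = (\<Sum>i<m. w (b + i))"
proof (induction m)
  case (Suc m) then show ?case by (simp add: algebra_simps)
qed simp

lemma DT:
  fixes w :: "nat \<Rightarrow> real"
  assumes hyp: "\<And>j. min n n' \<le> j \<Longrightarrow> j < max n n' \<Longrightarrow> \<bar>w j - w n - \<beta> * (real j - real n)\<bar> \<le> E"
  shows "\<bar>sum w {..<n'} - sum w {..<n} - (real n' - real n) * w n - \<beta> * ((real n' - real n) * (real n' - real n - 1) / 2)\<bar>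
          \<le> \<bar>real n' - real n\<bar> * E"
proof (cases "n \<le> n'")
  case True
  define m where "m = n' - n"
  have n': "n' = n + m" using True m_def by simp
  have "(\<Sum>i<m. w (n + i) - w n - \<beta> * real i) = (\<Sum>i<m. w (n + i)) - real m * w n - \<beta> * (\<Sum>i<m. real i)"
    by (simp add: sum_subtractf sum_distrib_left)
  also have "\<dots> = sum w {..<n'} - sum w {..<n} - (real n' - real n) * w n - \<beta> * ((real n' - real n) * (real n' - real n - 1) / 2)"
    unfolding n' sum_block sum_gauss by simp
  finally have eq: "sum w {..<n'} - sum w {..<n} - (real n' - real n) * w n - \<beta> * ((real n' - real n) * (real n' - real n - 1) / 2)
      = (\<Sum>i<m. w (n + i) - w n - \<beta> * real i)" ..
  have "\<bar>\<Sum>i<m. w (n + i) - w n - \<beta> * real i\<bar> \<le> (\<Sum>i<m. \<bar>w (n + i) - w n - \<beta> * real i\<bar>)"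
    by (rule sum_abs)
  also have "\<dots> \<le> (\<Sum>i<m. E)"
  proof (rule sum_mono)
    fix i assume "i \<in> {..<m}"
    then show "\<bar>w (n + i) - w n - \<beta> * real i\<bar> \<le> E" using hyp[of "n + i"] n' by simp
  qed
  also have "\<dots> = \<bar>real n' - real n\<bar> * E" using n' by simp
  finally show ?thesis unfolding eq .
next
  case False
  define m where "m = n - n'"
  have n: "n = n' + m" using False m_def by simp
  have bb: "(\<Sum>i<m. \<beta> * (real i - real m)) = \<beta> * ((\<Sum>i<m. real i) - real m * real m)"
    by (simp add: sum_distrib_left[symmetric] sum_subtractf)
  have "(\<Sum>i<m. w (n' + i) - w n - \<beta> * (real i - real m)) = (\<Sum>i<m. w (n' + i)) - real m * w n - \<beta> * ((\<Sum>i<m. real i) - real m * real m)"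
    by (simp add: sum_subtractf bb)
  also have "\<dots> = -(sum w {..<n'} - sum w {..<n} - (real n' - real n) * w n - \<beta> * ((real n' - real n) * (real n' - real n - 1) / 2))"
  proof -
    have sb: "sum w {..<n} = sum w {..<n'} + (\<Sum>i<m. w (n' + i))" using sum_block[of w n' m] n by simp
    have rn: "real n = real n' + real m" using n by simp
    show ?thesis unfolding sb sum_gauss rn by (simp add: field_simps)
  qed
  finally have eq: "sum w {..<n'} - sum w {..<n} - (real n' - real n) * w n - \<beta> * ((real n' - real n) * (real n' - real n - 1) / 2)
      = -(\<Sum>i<m. w (n' + i) - w n - \<beta> * (real i - real m))" by linarith
  have "\<bar>\<Sum>i<m. w (n' + i) - w n - \<beta> * (real i - real m)\<bar> \<le> (\<Sum>i<m. \<bar>w (n' + i) - w n - \<beta> * (real i - real m)\<bar>)"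
    by (rule sum_abs)
  also have "\<dots> \<le> (\<Sum>i<m. E)"
  proof (rule sum_mono)
    fix i assume "i \<in> {..<m}"
    then show "\<bar>w (n' + i) - w n - \<beta> * (real i - real m)\<bar> \<le> E" using hyp[of "n' + i"] n by simp
  qed
  also have "\<dots> = \<bar>real n' - real n\<bar> * E" using n by simp
  finally show ?thesis unfolding eq by simp
qed


lemma mono_int:
  fixes g :: "nat \<Rightarrow> 'a \<Rightarrow> real" and M :: "'a pmf"
  assumes g0: "\<And>k x. 0 \<le> g k x" and gi: "\<And>k. integrable M (g k)" and gC: "\<And>k. (\<integral>x. g k x \<partial>M) \<le> C"
    and gmono: "\<And>k x. g k x \<le> g (Suc k) x" and gle: "\<And>k x. g k x \<le> f x" and geq: "\<And>x. \<exists>k. g k x = f x"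
  shows "integrable M f"
proof (rule integrableI_nonneg)
  show f0: "AE x in M. 0 \<le> f x" using g0 gle by (intro AE_I2) (meson order_trans)
  have sup: "(\<Squnion>k. ennreal (g k x)) = ennreal (f x)" for x
  proof (rule antisym)
    show "(\<Squnion>k. ennreal (g k x)) \<le> ennreal (f x)" using gle by (auto intro!: SUP_least ennreal_leI)
    obtain k where "g k x = f x" using geq by blast
    then have "ennreal (f x) = ennreal (g k x)" by simp
    also have "\<dots> \<le> (\<Squnion>k. ennreal (g k x))" by (rule SUP_upper) simp
    finally show "ennreal (f x) \<le> (\<Squnion>k. ennreal (g k x))" .
  qed
  have "(\<integral>\<^sup>+x. ennreal (f x) \<partial>M) = (\<integral>\<^sup>+x. (\<Squnion>k. ennreal (g k x)) \<partial>M)" by (simp add: sup)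
  also have "\<dots> = (\<Squnion>k. \<integral>\<^sup>+x. ennreal (g k x) \<partial>M)"
    by (rule nn_integral_monotone_convergence_SUP) (auto simp: incseq_Suc_iff le_fun_def gmono intro!: ennreal_leI)
  also have "\<dots> \<le> ennreal C"
  proof (rule SUP_least)
    fix k
    have "(\<integral>\<^sup>+x. ennreal (g k x) \<partial>M) = ennreal (\<integral>x. g k x \<partial>M)"
      by (rule nn_integral_eq_integral[OF gi]) (use g0 in auto)
    also have "\<dots> \<le> ennreal C" using gC[of k] by (rule ennreal_leI)
    finally show "(\<integral>\<^sup>+x. ennreal (g k x) \<partial>M) \<le> ennreal C" .
  qed
  finally have le: "(\<integral>\<^sup>+x. ennreal (f x) \<partial>M) \<le> ennreal C" .
  show "(\<integral>\<^sup>+x. ennreal (f x) \<partial>M) < \<infinity>" unfolding infinity_ennreal_def using le ennreal_less_top[of C] by (rule le_less_trans)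
qed simp

locale Qc =
  fixes A S p :: "nat pmf" and \<epsilon> \<mu> :: real and Amax Smax :: nat
  assumes stat: "stationary_queue A S p"
    and A_bdd: "set_pmf A \<subseteq> {..Amax}" and S_bdd: "set_pmf S \<subseteq> {..Smax}"
    and EA: "measure_pmf.expectation A real = \<mu> - \<epsilon>" and ES: "measure_pmf.expectation S real = \<mu>"
    and eps: "0 < \<epsilon>"
begin

abbreviation "P \<equiv> pair_pmf A S"
definition "L = Amax + Smax"

lemma fA: "finite (set_pmf A)" using A_bdd finite_subset by blast
lemma fS: "finite (set_pmf S)" using S_bdd finite_subset by blast
lemma iP: "integrable (measure_pmf P) (f :: nat \<times> nat \<Rightarrow> real)" by (rule int_pair[OF fA fS])

lemma zset: "z \<in> set_pmf P \<Longrightarrow> fst z \<le> Amax \<and> snd z \<le> Smax"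
  using A_bdd S_bdd by (auto simp: set_pair_pmf)

definition "Dn n z = real (n + fst z - snd z) - real n"
definition "Uq n z = real (n + fst z - snd z) - (real n + real (fst z) - real (snd z))"
definition "ub n = (\<integral>z. Uq n z \<partial>P)"

lemma Dn_Uq: "Dn n z = (real (fst z) - real (snd z)) + Uq n z"
  unfolding Dn_def Uq_def by simp

lemma Dn_bd: assumes "z \<in> set_pmf P" shows "\<bar>Dn n z\<bar> \<le> real L"
proof -
  obtain x y where z: "z = (x, y)" by (cases z)
  have b: "x \<le> Amax" "y \<le> Smax" using zset[OF assms] z by auto
  show ?thesis
  proof (cases "y \<le> n + x")
    case True
    then have "Dn n z = real x - real y" unfolding Dn_def z by (simp add: of_nat_diff)
    then show ?thesis using b unfolding L_def by simp
  next
    case False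
    then have "Dn n z = - real n" unfolding Dn_def z by simp
    then show ?thesis using b False unfolding L_def by simp
  qed
qed

lemma Uq_bd: assumes "z \<in> set_pmf P" shows "0 \<le> Uq n z \<and> Uq n z \<le> real Smax \<and> (Smax \<le> n \<longrightarrow> Uq n z = 0)"
proof -
  obtain x y where z: "z = (x, y)" by (cases z)
  have b: "x \<le> Amax" "y \<le> Smax" using zset[OF assms] z by auto
  show ?thesis
  proof (cases "y \<le> n + x")
    case True
    then have "Uq n z = 0" unfolding Uq_def z by (simp add: of_nat_diff)
    then show ?thesis by simp
  next
    case False
    then have "Uq n z = real y - real x - real n" unfolding Uq_def z by simp
    then show ?thesis using b False by simp
  qed
qed

lemma ub_bd: "0 \<le> ub n \<and> ub n \<le> real Smax \<and> (Smax \<le> n \<longrightarrow> ub n = 0)"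
proof (intro conjI impI)
  show "0 \<le> ub n" unfolding ub_def by (intro integral_nonneg_AE AE_pmfI) (use Uq_bd in auto)
  have "ub n \<le> (\<integral>z. real Smax \<partial>P)" unfolding ub_def
    by (intro integral_mono_AE iP AE_pmfI) (use Uq_bd in auto)
  then show "ub n \<le> real Smax" by simp
  assume "Smax \<le> n"
  then have "ub n = (\<integral>z. 0 \<partial>P)" unfolding ub_def
    by (intro integral_cong_AE AE_pmfI) (use Uq_bd in auto)
  then show "ub n = 0" by simp
qed

lemma E_w: "(\<integral>z. real (fst z) - real (snd z) \<partial>P) = - \<epsilon>"
  using EA ES by (subst Bochner_Integration.integral_diff) (auto intro: iP)

lemma E_Dn: "(\<integral>z. Dn n z \<partial>P) = - \<epsilon> + ub n"
  unfolding Dn_Uq ub_def using E_w by (subst Bochner_Integration.integral_add) (auto intro: iP)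

lemma int_const_P: "(\<integral>z. c \<partial>P) = (c::real)" by simp

end


lemma between_abs: "min n a \<le> j \<Longrightarrow> j < max n a \<Longrightarrow> \<bar>real j - real n\<bar> \<le> \<bar>real a - real n\<bar>"
  for n a j :: nat by (cases "n \<le> a") (auto simp: min_def max_def)

context Qc begin

lemma psum_bd:
  fixes w :: "nat \<Rightarrow> real"
  assumes w0: "\<And>j. 0 \<le> w j" and wK: "\<And>j. K \<le> j \<Longrightarrow> w j = 0"
  shows "0 \<le> sum w {..<n} \<and> sum w {..<n} \<le> sum w {..<K}"
proof (induction n)
  case (Suc n)
  show ?case
  proof (cases "n < K")
    case True
    have "sum w {..<Suc n} \<le> sum w {..<K}" by (rule sum_mono2) (use True w0 in auto)
    then show ?thesis using Suc w0[of n] by simp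
  next
    case False then show ?thesis using Suc wK[of n] by simp
  qed
qed (simp add: sum_nonneg w0)

lemma Tq_diff: "Tq A S \<phi> n - \<phi> n = (\<integral>z. \<phi> (n + fst z - snd z) - \<phi> n \<partial>P)"
  unfolding Tq_def by (subst Bochner_Integration.integral_diff) (auto intro: iP)

lemma drift:
  fixes w lam :: "nat \<Rightarrow> real" and K :: nat and cw :: real
  assumes w0: "\<And>j. 0 \<le> w j" and wK: "\<And>j. K \<le> j \<Longrightarrow> w j = 0"
    and lip: "\<And>n j. \<bar>real j - real n\<bar> \<le> real L \<Longrightarrow> \<bar>w j - w n\<bar> \<le> lam n * \<bar>real j - real n\<bar>"
    and lam0: "\<And>n. 0 \<le> lam n" and ilam: "integrable (measure_pmf p) lam"
    and cw: "\<And>n. n < Smax \<Longrightarrow> w n \<le> cw"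
  shows "\<epsilon> * (\<integral>n. w n \<partial>p) \<le> real Smax * cw + (real L)^2 * (\<integral>n. lam n \<partial>p)"
proof -
  define \<phi> where "\<phi> n = sum w {..<n}" for n
  define B where "B = sum w {..<K}"
  have \<phi>b: "\<bar>\<phi> n\<bar> \<le> B" for n using psum_bd[OF w0 wK, where n=n] unfolding \<phi>_def B_def by auto
  have st: "integrable (measure_pmf p) (Tq A S \<phi>) \<and> (\<integral>n. Tq A S \<phi> n \<partial>p) = (\<integral>n. \<phi> n \<partial>p)"
    by (rule STAT[OF stat fA fS \<phi>b]) simp
  have i\<phi>: "integrable (measure_pmf p) \<phi>"
    by (rule measure_pmf.integrable_const_bound[where B=B]) (use \<phi>b in auto)
  have wb: "\<bar>w n\<bar> \<le> B" for n
  proof (cases "n < K")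
    case True
    then have "w n \<le> B" unfolding B_def using w0 by (intro member_le_sum) auto
    then show ?thesis using w0[of n] by simp
  next
    case False then show ?thesis using wK[of n] psum_bd[OF w0 wK, where n=K] unfolding B_def by auto
  qed
  have iw: "integrable (measure_pmf p) w"
    by (rule measure_pmf.integrable_const_bound[where B=B]) (use wb in auto)
  have pt: "Tq A S \<phi> n - \<phi> n \<le> - \<epsilon> * w n + real Smax * cw + (real L)^2 * lam n" for n
  proof -
    have a: "\<phi> (n + fst z - snd z) - \<phi> n \<le> Dn n z * w n + (real L)^2 * lam n" if z: "z \<in> set_pmf P" for z
    proof -
      let ?n' = "n + fst z - snd z"
      have dn: "real ?n' - real n = Dn n z" unfolding Dn_def by simp
      have dL: "\<bar>real ?n' - real n\<bar> \<le> real L" using Dn_bd[OF z] dn by simp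
      have "\<bar>sum w {..<?n'} - sum w {..<n} - (real ?n' - real n) * w n - 0 * ((real ?n' - real n) * (real ?n' - real n - 1) / 2)\<bar>
          \<le> \<bar>real ?n' - real n\<bar> * (lam n * real L)"
      proof (rule DT)
        fix j assume j: "min n ?n' \<le> j" "j < max n ?n'"
        have "\<bar>real j - real n\<bar> \<le> \<bar>real ?n' - real n\<bar>" using between_abs[OF j] .
        then have jl: "\<bar>real j - real n\<bar> \<le> real L" using dL by linarith
        have "\<bar>w j - w n\<bar> \<le> lam n * \<bar>real j - real n\<bar>" by (rule lip[OF jl])
        also have "\<dots> \<le> lam n * real L" using jl lam0[of n] by (intro mult_left_mono) auto
        finally show "\<bar>w j - w n - 0 * (real j - real n)\<bar> \<le> lam n * real L" by simp
      qed
      also have "\<dots> \<le> real L * (lam n * real L)" using dL lam0[of n] by (intro mult_right_mono) auto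
      finally have "\<bar>\<phi> ?n' - \<phi> n - Dn n z * w n\<bar> \<le> (real L)^2 * lam n"
        unfolding \<phi>_def dn by (simp add: power2_eq_square algebra_simps)
      then show ?thesis by linarith
    qed
    have "Tq A S \<phi> n - \<phi> n \<le> (\<integral>z. Dn n z * w n + (real L)^2 * lam n \<partial>P)"
      unfolding Tq_diff by (intro integral_mono_AE iP AE_pmfI a)
    also have "\<dots> = (- \<epsilon> + ub n) * w n + (real L)^2 * lam n"
      using E_Dn[of n] by (simp add: iP)
    also have "\<dots> \<le> - \<epsilon> * w n + real Smax * cw + (real L)^2 * lam n"
    proof -
      have "ub n * w n \<le> real Smax * cw"
      proof (cases "n < Smax")
        case True
        then show ?thesis using ub_bd[of n] cw[OF True] w0[of n] by (intro mult_mono) auto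
      next
        case False
        then have "ub n = 0" using ub_bd[of n] by simp
        moreover have "0 \<le> real Smax * cw"
        proof (cases "Smax = 0")
          case False
          then have "0 \<le> cw" using cw[of 0] w0[of 0] by auto
          then show ?thesis by simp
        qed simp
        ultimately show ?thesis by simp
      qed
      then show ?thesis by (simp add: algebra_simps)
    qed
    finally show ?thesis .
  qed
  have "0 = (\<integral>n. Tq A S \<phi> n \<partial>p) - (\<integral>n. \<phi> n \<partial>p)" using st by simp
  also have "\<dots> = (\<integral>n. Tq A S \<phi> n - \<phi> n \<partial>p)" using st i\<phi> by simp
  also have "\<dots> \<le> (\<integral>n. - \<epsilon> * w n + real Smax * cw + (real L)^2 * lam n \<partial>p)"
    by (intro integral_mono) (use st i\<phi> iw ilam pt in auto)
  also have "\<dots> = - \<epsilon> * (\<integral>n. w n \<partial>p) + real Smax * cw + (real L)^2 * (\<integral>n. lam n \<partial>p)"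
    using iw ilam by simp
  finally show ?thesis by simp
qed

end


context Qc begin

definition "tent M n = real (min n (2 * M - n))"

lemma tent_lip: "\<bar>tent M j - tent M n\<bar> \<le> \<bar>real j - real n\<bar>"
  unfolding tent_def by (auto simp: min_def abs_if split: if_splits)
lemma tent_le: "tent M n \<le> real n" "0 \<le> tent M n" unfolding tent_def by auto
lemma tent_zero: "2 * M \<le> n \<Longrightarrow> tent M n = 0" unfolding tent_def by auto
lemma tent_mono: "tent M n \<le> tent (Suc M) n" unfolding tent_def by auto
lemma tent_eq: "tent n n = real n" unfolding tent_def by auto

lemma mom1: "integrable (measure_pmf p) (\<lambda>n. real n)"
proof (rule mono_int[where g=tent])
  fix M
  have "\<epsilon> * (\<integral>n. tent M n \<partial>p) \<le> real Smax * real Smax + (real L)^2 * (\<integral>n. 1 \<partial>p)"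
  proof (rule drift[where K="2*M"])
    show "\<And>j. 0 \<le> tent M j" by (rule tent_le)
    show "\<And>j. 2 * M \<le> j \<Longrightarrow> tent M j = 0" by (rule tent_zero)
    show "\<And>n j. \<bar>real j - real n\<bar> \<le> real L \<Longrightarrow> \<bar>tent M j - tent M n\<bar> \<le> 1 * \<bar>real j - real n\<bar>"
      using tent_lip by simp
    show "\<And>n. n < Smax \<Longrightarrow> tent M n \<le> real Smax" using tent_le(1) by (meson less_imp_le of_nat_le_iff order_trans)
  qed auto
  then have "(\<integral>n. tent M n \<partial>p) \<le> (real Smax * real Smax + (real L)^2) / \<epsilon>"
    using eps by (simp add: field_simps)
  then show "(\<integral>n. tent M n \<partial>p) \<le> (real Smax * real Smax + (real L)^2) / \<epsilon>" .
  show "integrable (measure_pmf p) (tent M)"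
    by (rule measure_pmf.integrable_const_bound[where B="real (2*M)"]) (auto simp: tent_def)
qed (auto intro: tent_le tent_mono tent_eq)

lemma mom2: "integrable (measure_pmf p) (\<lambda>n. (real n)^2)"
proof (rule mono_int[where g="\<lambda>M n. (tent M n)^2"])
  fix M
  have "\<epsilon> * (\<integral>n. (tent M n)^2 \<partial>p) \<le> real Smax * (real Smax)^2 + (real L)^2 * (\<integral>n. 2 * real n + real L \<partial>p)"
  proof (rule drift[where K="2*M"])
    show "\<And>j. 0 \<le> (tent M j)^2" by simp
    show "\<And>j. 2 * M \<le> j \<Longrightarrow> (tent M j)^2 = 0" by (simp add: tent_zero)
    show "\<And>n j. \<bar>real j - real n\<bar> \<le> real L \<Longrightarrow> \<bar>(tent M j)^2 - (tent M n)^2\<bar> \<le> (2 * real n + real L) * \<bar>real j - real n\<bar>"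
    proof -
      fix n j assume jl: "\<bar>real j - real n\<bar> \<le> real L"
      have t: "\<bar>tent M j - tent M n\<bar> \<le> \<bar>real j - real n\<bar>" by (rule tent_lip)
      have s: "tent M j + tent M n \<le> 2 * real n + real L" using t jl tent_le[of M n] by linarith
      have "\<bar>(tent M j)^2 - (tent M n)^2\<bar> = \<bar>tent M j - tent M n\<bar> * (tent M j + tent M n)"
      proof -
        have "(tent M j)^2 - (tent M n)^2 = (tent M j - tent M n) * (tent M j + tent M n)"
          by (simp add: power2_eq_square algebra_simps)
        then show ?thesis using tent_le(2)[of M j] tent_le(2)[of M n] by (simp add: abs_mult)
      qed
      also have "\<dots> \<le> \<bar>real j - real n\<bar> * (2 * real n + real L)"
        using t s tent_le(2)[of M j] tent_le(2)[of M n] by (intro mult_mono) auto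
      finally show "\<bar>(tent M j)^2 - (tent M n)^2\<bar> \<le> (2 * real n + real L) * \<bar>real j - real n\<bar>"
        by (simp add: mult.commute)
    qed
    show "\<And>n. 0 \<le> 2 * real n + real L" by simp
    show "integrable (measure_pmf p) (\<lambda>n. 2 * real n + real L)" using mom1 by simp
    show "(tent M n)^2 \<le> (real Smax)^2" if "n < Smax" for n
    proof -
      have "tent M n \<le> real Smax" using tent_le(1)[of M n] that by linarith
      then show ?thesis using tent_le(2)[of M n] by (intro power_mono) auto
    qed
  qed
  then show "(\<integral>n. (tent M n)^2 \<partial>p) \<le> (real Smax * (real Smax)^2 + (real L)^2 * (\<integral>n. 2 * real n + real L \<partial>p)) / \<epsilon>"
    using eps by (simp add: field_simps)
  show "integrable (measure_pmf p) (\<lambda>n. (tent M n)^2)"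
  proof (rule measure_pmf.integrable_const_bound[where B="real (2*M)^2"])
    show "AE x in measure_pmf p. norm ((tent M x)^2) \<le> real (2*M)^2"
    proof (rule AE_I2)
      fix x
      have "tent M x \<le> real (2*M)" unfolding tent_def by auto
      then have "(tent M x)^2 \<le> (real (2*M))^2" using tent_le(2)[of M x] by (intro power_mono) auto
      then show "norm ((tent M x)^2) \<le> real (2*M)^2" by simp
    qed
  qed simp
next
  show "\<exists>k. (tent k x)^2 = (real x)^2" for x by (rule exI[of _ x]) (simp add: tent_eq)
qed (auto intro: tent_le tent_mono power_mono)

lemma ub_int: "integrable (measure_pmf p) ub"
  by (rule measure_pmf.integrable_const_bound[where B="real Smax"]) (use ub_bd in auto)

lemma ub_mean: "(\<integral>n. ub n \<partial>p) = \<epsilon>"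
proof -
  have st: "integrable (measure_pmf p) (Tq A S real) \<and> (\<integral>n. Tq A S real n \<partial>p) = (\<integral>n. real n \<partial>p)"
    by (rule STAT[OF stat fA fS _ mom1]) simp
  have T: "Tq A S real n = real n - \<epsilon> + ub n" for n
  proof -
    have "Tq A S real n = (\<integral>z. real n + Dn n z \<partial>P)" unfolding Tq_def Dn_def by simp
    also have "\<dots> = real n + (- \<epsilon> + ub n)" using E_Dn[of n] by (simp add: iP)
    finally show ?thesis by simp
  qed
  have "(\<integral>n. real n - \<epsilon> + ub n \<partial>p) = (\<integral>n. real n \<partial>p) - \<epsilon> + (\<integral>n. ub n \<partial>p)"
    using mom1 ub_int by simp
  then show ?thesis using st unfolding T by simp
qed

end


context Qc begin

lemma E_prod: "(\<integral>z. f (fst z) * g (snd z) \<partial>P) = (\<integral>x. f x \<partial>A) * (\<integral>y. g y \<partial>S)" for f g :: "nat \<Rightarrow> real"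
proof -
  have "(\<integral>z. f (fst z) * g (snd z) \<partial>P) = (\<Sum>z\<in>set_pmf A \<times> set_pmf S. f (fst z) * g (snd z) * pmf P z)"
    by (rule integral_measure_pmf_real) (auto simp: fA fS)
  also have "\<dots> = (\<Sum>(x,y)\<in>set_pmf A \<times> set_pmf S. (f x * pmf A x) * (g y * pmf S y))"
    by (intro sum.cong refl) (auto simp: pmf_pair algebra_simps)
  also have "\<dots> = (\<Sum>x\<in>set_pmf A. \<Sum>y\<in>set_pmf S. (f x * pmf A x) * (g y * pmf S y))"
    by (simp add: sum.cartesian_product)
  also have "\<dots> = (\<Sum>x\<in>set_pmf A. f x * pmf A x) * (\<Sum>y\<in>set_pmf S. g y * pmf S y)"
    by (simp add: sum_product)
  also have "\<dots> = (\<integral>x. f x \<partial>A) * (\<integral>y. g y \<partial>S)"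
    by (subst (1 2) integral_measure_pmf_real) (auto simp: fA fS)
  finally show ?thesis .
qed

lemma iA: "integrable (measure_pmf A) (f :: nat \<Rightarrow> real)" by (rule integrable_measure_pmf_finite[OF fA])
lemma iS: "integrable (measure_pmf S) (f :: nat \<Rightarrow> real)" by (rule integrable_measure_pmf_finite[OF fS])

lemma E_w2: "(\<integral>z. (real (fst z) - real (snd z))^2 \<partial>P)
   = measure_pmf.variance A real + measure_pmf.variance S real + \<epsilon>^2"
proof -
  have "(\<integral>z. (real (fst z) - real (snd z))^2 \<partial>P)
      = (\<integral>z. (real (fst z))^2 \<partial>P) - 2 * (\<integral>z. real (fst z) * real (snd z) \<partial>P) + (\<integral>z. (real (snd z))^2 \<partial>P)"
  proof -
    have "(\<lambda>z. (real (fst z) - real (snd z))^2) = (\<lambda>z. (real (fst z))^2 - 2 * (real (fst z) * real (snd z)) + (real (snd z))^2)"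
      by (simp add: power2_diff algebra_simps)
    then show ?thesis by (simp add: iP)
  qed
  also have "\<dots> = (\<integral>x. (real x)^2 \<partial>A) - 2 * ((\<mu> - \<epsilon>) * \<mu>) + (\<integral>y. (real y)^2 \<partial>S)"
    using E_prod[of real real] EA ES expectation_pair_pmf_fst[of A S "\<lambda>x. (real x)^2"]
      expectation_pair_pmf_snd[of A S "\<lambda>x. (real x)^2"] by simp
  also have "measure_pmf.variance A real = (\<integral>x. (real x)^2 \<partial>A) - (\<mu> - \<epsilon>)^2"
    using measure_pmf.variance_eq[OF iA[of real] iA] EA by simp
  moreover have "measure_pmf.variance S real = (\<integral>x. (real x)^2 \<partial>S) - \<mu>^2"
    using measure_pmf.variance_eq[OF iS[of real] iS] ES by simp
  ultimately show ?thesis by (simp add: power2_eq_square algebra_simps)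
qed

end


context Qc begin

lemma E_DnDn: "(\<integral>z. Dn n z * (Dn n z - 1) \<partial>P)
   = measure_pmf.variance A real + measure_pmf.variance S real + \<epsilon>^2 + \<epsilon>
     + (\<integral>z. Uq n z * (2 * (real (fst z) - real (snd z)) + Uq n z - 1) \<partial>P)"
proof -
  have eq: "Dn n z * (Dn n z - 1) = (real (fst z) - real (snd z))^2 - (real (fst z) - real (snd z))
       + Uq n z * (2 * (real (fst z) - real (snd z)) + Uq n z - 1)" for z
    unfolding Dn_Uq by (simp add: power2_eq_square algebra_simps)
  show ?thesis unfolding eq using E_w2 E_w by (simp add: iP)
qed

lemma rr_bd: "\<bar>\<integral>z. Uq n z * (2 * (real (fst z) - real (snd z)) + Uq n z - 1) \<partial>P\<bar> \<le> (3 * real L + 1) * ub n"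
proof -
  have "\<bar>\<integral>z. Uq n z * (2 * (real (fst z) - real (snd z)) + Uq n z - 1) \<partial>P\<bar>
     \<le> (\<integral>z. \<bar>Uq n z * (2 * (real (fst z) - real (snd z)) + Uq n z - 1)\<bar> \<partial>P)"
    by (rule integral_abs_bound)
  also have "\<dots> \<le> (\<integral>z. (3 * real L + 1) * Uq n z \<partial>P)"
  proof (intro integral_mono_AE iP AE_pmfI)
    fix z assume z: "z \<in> set_pmf P"
    have u: "0 \<le> Uq n z" "Uq n z \<le> real Smax" using Uq_bd[OF z] by auto
    have "fst z \<le> Amax" "snd z \<le> Smax" using zset[OF z] by auto
    then have "\<bar>2 * (real (fst z) - real (snd z)) + Uq n z - 1\<bar> \<le> 3 * real L + 1"
      using u unfolding L_def by (simp add: abs_le_iff)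
    then have "Uq n z * \<bar>2 * (real (fst z) - real (snd z)) + Uq n z - 1\<bar> \<le> Uq n z * (3 * real L + 1)"
      using u by (intro mult_left_mono) auto
    then show "\<bar>Uq n z * (2 * (real (fst z) - real (snd z)) + Uq n z - 1)\<bar> \<le> (3 * real L + 1) * Uq n z"
      using u by (simp add: abs_mult mult.commute)
  qed
  also have "\<dots> = (3 * real L + 1) * ub n" unfolding ub_def by (simp add: iP)
  finally show ?thesis .
qed

end


lemma int_bd: fixes f B :: "'a \<Rightarrow> real"
  assumes "integrable M B" "\<And>n. \<bar>f n\<bar> \<le> B n" "f \<in> borel_measurable M" shows "integrable M f"
proof (rule Bochner_Integration.integrable_bound[OF assms(1)])
  show "AE x in M. norm (f x) \<le> norm (B x)"
  proof (rule AE_I2)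
    fix x show "norm (f x) \<le> norm (B x)" using assms(2)[of x] by simp
  qed
qed (rule assms(3))

context Qc begin

lemma stein_main:
  fixes l T Dm :: real and h :: "real \<Rightarrow> real"
  assumes l: "0 < l" and h: "lip1 h" and lT: "l \<le> T"
    and lV: "measure_pmf.variance A real + measure_pmf.variance S real = 2 / l"
    and DmL: "\<epsilon> * real L \<le> Dm" and em: "\<epsilon> \<le> \<mu>"
  shows "\<bar>(\<integral>n. h (\<epsilon> * real n) \<partial>p) - Jx l h\<bar>
     \<le> \<epsilon> * (real Smax + (\<mu> + 3 * real L + 2) / 2 + (real L)^3 * (2 * T * exp (T * Dm) + 2 * T))"
proof -
  define C1 where "C1 = 2 * T * exp (T * Dm) + 2 * T"
  define V where "V = measure_pmf.variance A real + measure_pmf.variance S real"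
  define G where "G n = gS l h (\<epsilon> * real n)" for n
  define \<Psi> where "\<Psi> n = psiS l h (\<epsilon> * real n)" for n
  define F where "F n = sum G {..<n}" for n
  define X where "X n = \<Psi> n / l - G n" for n
  define rr where "rr n = (\<integral>z. Uq n z * (2 * (real (fst z) - real (snd z)) + Uq n z - 1) \<partial>P)" for n
  have C10: "0 \<le> C1" unfolding C1_def using l lT by simp
  have Gb: "\<bar>G n\<bar> \<le> \<epsilon> * real n" for n
    unfolding G_def using g_bd[OF l h, of "\<epsilon> * real n"] eps by simp
  have \<Psi>b: "\<bar>\<Psi> n\<bar> \<le> 1" for n unfolding \<Psi>_def by (rule psi_bd[OF l h])
  have Xeq: "X n = h (\<epsilon> * real n) - Jx l h" for n
    unfolding X_def \<Psi>_def G_def by (rule stein_id[OF l h])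
  have Fb: "\<bar>F n\<bar> \<le> \<epsilon> * (real n)^2" for n
  proof -
    have "\<bar>F n\<bar> \<le> (\<Sum>j<n. \<bar>G j\<bar>)" unfolding F_def by (rule sum_abs)
    also have "\<dots> \<le> (\<Sum>j<n. \<epsilon> * real n)"
    proof (rule sum_mono)
      fix j assume "j \<in> {..<n}"
      then have "\<epsilon> * real j \<le> \<epsilon> * real n" using eps by (intro mult_left_mono) auto
      then show "\<bar>G j\<bar> \<le> \<epsilon> * real n" using Gb[of j] by linarith
    qed
    also have "\<dots> = \<epsilon> * (real n)^2" by (simp add: power2_eq_square)
    finally show ?thesis .
  qed
  have iB: "integrable (measure_pmf p) (\<lambda>n. \<epsilon> * (real n)^2)" using mom2 by simp
  have st: "integrable (measure_pmf p) (Tq A S F) \<and> (\<integral>n. Tq A S F n \<partial>p) = (\<integral>n. F n \<partial>p)"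
    by (rule STAT[OF stat fA fS Fb iB])
  have iF: "integrable (measure_pmf p) F"
    by (rule int_bd[OF iB Fb]) simp
  have iG: "integrable (measure_pmf p) G"
    by (rule int_bd[OF _ Gb]) (use mom1 in simp_all)
  have i\<Psi>: "integrable (measure_pmf p) \<Psi>"
    by (rule measure_pmf.integrable_const_bound[where B=1]) (use \<Psi>b in auto)
  have iX: "integrable (measure_pmf p) X" unfolding X_def using iG i\<Psi> by simp
  have key: "\<bar>F (n + fst z - snd z) - F n - Dn n z * G n - \<epsilon> * \<Psi> n * (Dn n z * (Dn n z - 1) / 2)\<bar>
      \<le> real L * (C1 * (\<epsilon> * real L)^2)" if z: "z \<in> set_pmf P" for n z
  proof -
    let ?n' = "n + fst z - snd z"
    have dn: "real ?n' - real n = Dn n z" unfolding Dn_def by simp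
    have dL: "\<bar>real ?n' - real n\<bar> \<le> real L" using Dn_bd[OF z] dn by simp
    have "\<bar>sum G {..<?n'} - sum G {..<n} - (real ?n' - real n) * G n - (\<epsilon> * \<Psi> n) * ((real ?n' - real n) * (real ?n' - real n - 1) / 2)\<bar>
        \<le> \<bar>real ?n' - real n\<bar> * (C1 * (\<epsilon> * real L)^2)"
    proof (rule DT)
      fix j assume j: "min n ?n' \<le> j" "j < max n ?n'"
      have jl: "\<bar>real j - real n\<bar> \<le> real L" using between_abs[OF j] dL by linarith
      have d1: "\<bar>\<epsilon> * real j - \<epsilon> * real n\<bar> = \<epsilon> * \<bar>real j - real n\<bar>"
        using eps by (simp add: abs_mult right_diff_distrib[symmetric])
      have d2: "\<epsilon> * \<bar>real j - real n\<bar> \<le> \<epsilon> * real L" using jl eps by (intro mult_left_mono) auto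
      have "\<bar>gS l h (\<epsilon> * real j) - gS l h (\<epsilon> * real n) - psiS l h (\<epsilon> * real n) * (\<epsilon> * real j - \<epsilon> * real n)\<bar>
          \<le> C1 * (\<epsilon> * real j - \<epsilon> * real n)^2"
        unfolding C1_def by (rule taylor2[OF l h _ lT]) (use d1 d2 DmL in linarith)
      also have "\<dots> \<le> C1 * (\<epsilon> * real L)^2"
      proof (intro mult_left_mono C10)
        have "(\<epsilon> * real j - \<epsilon> * real n)^2 = \<bar>\<epsilon> * real j - \<epsilon> * real n\<bar>^2" by simp
        also have "\<dots> \<le> (\<epsilon> * real L)^2" using d1 d2 by (intro power_mono) auto
        finally show "(\<epsilon> * real j - \<epsilon> * real n)^2 \<le> (\<epsilon> * real L)^2" .
      qed
      finally show "\<bar>G j - G n - \<epsilon> * \<Psi> n * (real j - real n)\<bar> \<le> C1 * (\<epsilon> * real L)^2"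
        unfolding G_def \<Psi>_def by (simp add: algebra_simps)
    qed
    also have "\<dots> \<le> real L * (C1 * (\<epsilon> * real L)^2)" using dL C10 by (intro mult_right_mono) auto
    finally show ?thesis unfolding F_def dn .
  qed
  define e where "e n z = F (n + fst z - snd z) - F n - Dn n z * G n - \<epsilon> * \<Psi> n * (Dn n z * (Dn n z - 1) / 2)" for n z
  define Ee where "Ee n = (\<integral>z. e n z \<partial>P)" for n
  have Eeb: "\<bar>Ee n\<bar> \<le> real L * (C1 * (\<epsilon> * real L)^2)" for n
  proof -
    have "\<bar>Ee n\<bar> \<le> (\<integral>z. \<bar>e n z\<bar> \<partial>P)" unfolding Ee_def by (rule integral_abs_bound)
    also have "\<dots> \<le> (\<integral>z. real L * (C1 * (\<epsilon> * real L)^2) \<partial>P)"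
      by (intro integral_mono_AE iP AE_pmfI) (use key in \<open>auto simp: e_def\<close>)
    finally show ?thesis by simp
  qed
  have Teq: "Tq A S F n - F n = G n * (- \<epsilon> + ub n) + (\<epsilon> * \<Psi> n / 2) * (V + \<epsilon>^2 + \<epsilon> + rr n) + Ee n" for n
  proof -
    have ptw: "F (n + fst z - snd z) - F n = Dn n z * G n + (\<epsilon> * \<Psi> n / 2) * (Dn n z * (Dn n z - 1)) + e n z" for z
      unfolding e_def by simp
    have "Tq A S F n - F n = (\<integral>z. Dn n z * G n + (\<epsilon> * \<Psi> n / 2) * (Dn n z * (Dn n z - 1)) + e n z \<partial>P)"
      unfolding Tq_diff ptw ..
    also have "\<dots> = (\<integral>z. Dn n z \<partial>P) * G n + (\<epsilon> * \<Psi> n / 2) * (\<integral>z. Dn n z * (Dn n z - 1) \<partial>P) + Ee n"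
      unfolding Ee_def by (simp add: iP)
    also have "\<dots> = G n * (- \<epsilon> + ub n) + (\<epsilon> * \<Psi> n / 2) * (V + \<epsilon>^2 + \<epsilon> + rr n) + Ee n"
      unfolding E_Dn E_DnDn V_def rr_def by (simp add: algebra_simps)
    finally show ?thesis .
  qed
  define R where "R n = Tq A S F n - F n - \<epsilon> * X n" for n
  have Req: "R n = G n * ub n + (\<epsilon> * \<Psi> n / 2) * (\<epsilon>^2 + \<epsilon> + rr n) + Ee n" for n
  proof -
    have "V / 2 = 1 / l" unfolding V_def lV by simp
    then have "(\<epsilon> * \<Psi> n / 2) * V = \<epsilon> * (\<Psi> n / l)" by (simp add: field_simps)
    then show ?thesis unfolding R_def Teq X_def by (simp add: algebra_simps)
  qed
  define \<rho> where "\<rho> n = \<epsilon> * real Smax * ub n + (\<epsilon> / 2) * (\<epsilon>^2 + \<epsilon> + (3 * real L + 1) * ub n) + real L * (C1 * (\<epsilon> * real L)^2)" for n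
  have Rb: "\<bar>R n\<bar> \<le> \<rho> n" for n
  proof -
    have u: "0 \<le> ub n" "ub n \<le> real Smax" using ub_bd[of n] by auto
    have a: "\<bar>G n * ub n\<bar> \<le> \<epsilon> * real Smax * ub n"
    proof (cases "n < Smax")
      case True
      have "\<bar>G n\<bar> \<le> \<epsilon> * real Smax" using Gb[of n] True eps
        by (smt (verit) mult_left_mono of_nat_less_iff)
      then show ?thesis using u by (simp add: abs_mult mult_right_mono)
    next
      case False then show ?thesis using ub_bd[of n] by simp
    qed
    have b: "\<bar>(\<epsilon> * \<Psi> n / 2) * (\<epsilon>^2 + \<epsilon> + rr n)\<bar> \<le> (\<epsilon> / 2) * (\<epsilon>^2 + \<epsilon> + (3 * real L + 1) * ub n)"
    proof -
      have "\<bar>\<epsilon>^2 + \<epsilon> + rr n\<bar> \<le> \<epsilon>^2 + \<epsilon> + (3 * real L + 1) * ub n"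
      proof -
        have r: "\<bar>rr n\<bar> \<le> (3 * real L + 1) * ub n" using rr_bd[of n] unfolding rr_def .
        have "\<bar>\<epsilon>^2 + \<epsilon> + rr n\<bar> \<le> \<bar>\<epsilon>^2 + \<epsilon>\<bar> + \<bar>rr n\<bar>" by (rule abs_triangle_ineq)
        moreover have "\<bar>\<epsilon>^2 + \<epsilon>\<bar> = \<epsilon>^2 + \<epsilon>" using eps by simp
        ultimately show ?thesis using r by linarith
      qed
      moreover have "\<bar>\<epsilon> * \<Psi> n / 2\<bar> \<le> \<epsilon> / 2" using \<Psi>b[of n] eps by (simp add: abs_mult mult_left_le)
      ultimately have "\<bar>\<epsilon> * \<Psi> n / 2\<bar> * \<bar>\<epsilon>^2 + \<epsilon> + rr n\<bar> \<le> (\<epsilon> / 2) * (\<epsilon>^2 + \<epsilon> + (3 * real L + 1) * ub n)"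
        by (intro mult_mono) auto
      then show ?thesis by (simp only: abs_mult[symmetric])
    qed
    have t3: "\<bar>x + y + w\<bar> \<le> \<bar>x\<bar> + \<bar>y\<bar> + \<bar>w\<bar>" for x y w :: real by linarith
    show ?thesis unfolding Req \<rho>_def using a b Eeb[of n] t3[of "G n * ub n" "(\<epsilon> * \<Psi> n / 2) * (\<epsilon>^2 + \<epsilon> + rr n)" "Ee n"]
      by linarith
  qed
  have iR: "integrable (measure_pmf p) R" unfolding R_def using st iF iX by simp
  have i\<rho>: "integrable (measure_pmf p) \<rho>" unfolding \<rho>_def using ub_int by simp
  have "0 = (\<integral>n. Tq A S F n \<partial>p) - (\<integral>n. F n \<partial>p)" using st by simp
  also have "\<dots> = (\<integral>n. \<epsilon> * X n + R n \<partial>p)"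
    unfolding R_def using st iF iX by simp
  also have "\<dots> = \<epsilon> * (\<integral>n. X n \<partial>p) + (\<integral>n. R n \<partial>p)" using iX iR by simp
  finally have z: "\<epsilon> * (\<integral>n. X n \<partial>p) = - (\<integral>n. R n \<partial>p)" by linarith
  have "\<bar>\<integral>n. R n \<partial>p\<bar> \<le> (\<integral>n. \<bar>R n\<bar> \<partial>p)" by (rule integral_abs_bound)
  also have "\<dots> \<le> (\<integral>n. \<rho> n \<partial>p)" by (intro integral_mono) (use iR i\<rho> Rb in auto)
  also have "\<dots> = \<epsilon> * real Smax * \<epsilon> + (\<epsilon> / 2) * (\<epsilon>^2 + \<epsilon> + (3 * real L + 1) * \<epsilon>) + real L * (C1 * (\<epsilon> * real L)^2)"
    unfolding \<rho>_def using ub_int ub_mean by simp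
  also have "\<dots> \<le> \<epsilon> * (\<epsilon> * (real Smax + (\<mu> + 3 * real L + 2) / 2 + (real L)^3 * C1))"
  proof -
    have "(\<epsilon> / 2) * (\<epsilon>^2 + \<epsilon> + (3 * real L + 1) * \<epsilon>) = \<epsilon> * (\<epsilon> * ((\<epsilon> + 3 * real L + 2) / 2))"
      by (simp add: power2_eq_square algebra_simps)
    also have "\<dots> \<le> \<epsilon> * (\<epsilon> * ((\<mu> + 3 * real L + 2) / 2))"
      using eps em by (intro mult_left_mono) auto
    finally have "(\<epsilon> / 2) * (\<epsilon>^2 + \<epsilon> + (3 * real L + 1) * \<epsilon>) \<le> \<epsilon> * (\<epsilon> * ((\<mu> + 3 * real L + 2) / 2))" .
    moreover have "real L * (C1 * (\<epsilon> * real L)^2) = \<epsilon> * (\<epsilon> * ((real L)^3 * C1))"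
      by (simp add: power2_eq_square power3_eq_cube algebra_simps)
    moreover have "\<epsilon> * (\<epsilon> * (real Smax + (\<mu> + 3 * real L + 2) / 2 + (real L)^3 * C1))
       = \<epsilon> * real Smax * \<epsilon> + \<epsilon> * (\<epsilon> * ((\<mu> + 3 * real L + 2) / 2)) + \<epsilon> * (\<epsilon> * ((real L)^3 * C1))"
      by (simp add: algebra_simps)
    ultimately show ?thesis by linarith
  qed
  finally have f1: "\<bar>\<integral>n. R n \<partial>p\<bar> \<le> \<epsilon> * (\<epsilon> * (real Smax + (\<mu> + 3 * real L + 2) / 2 + (real L)^3 * C1))" .
  have "\<epsilon> * \<bar>\<integral>n. X n \<partial>p\<bar> = \<bar>\<integral>n. R n \<partial>p\<bar>"
  proof -
    have "\<epsilon> * \<bar>\<integral>n. X n \<partial>p\<bar> = \<bar>\<epsilon> * (\<integral>n. X n \<partial>p)\<bar>" using eps by (simp add: abs_mult)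
    also have "\<dots> = \<bar>\<integral>n. R n \<partial>p\<bar>" unfolding z by simp
    finally show ?thesis .
  qed
  then have "\<epsilon> * \<bar>\<integral>n. X n \<partial>p\<bar> \<le> \<epsilon> * (\<epsilon> * (real Smax + (\<mu> + 3 * real L + 2) / 2 + (real L)^3 * C1))"
    using f1 by simp
  then have "\<bar>\<integral>n. X n \<partial>p\<bar> \<le> \<epsilon> * (real Smax + (\<mu> + 3 * real L + 2) / 2 + (real L)^3 * C1)"
    using eps by (simp add: mult_le_cancel_left_pos)
  moreover have "(\<integral>n. X n \<partial>p) = (\<integral>n. h (\<epsilon> * real n) \<partial>p) - Jx l h"
  proof -
    have i1: "integrable (measure_pmf p) (\<lambda>n. (h (\<epsilon> * real n) - Jx l h) + Jx l h)"
      using iX unfolding Xeq by (intro Bochner_Integration.integrable_add) auto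
    have ih: "integrable (measure_pmf p) (\<lambda>n. h (\<epsilon> * real n))"
      using i1 by simp
    show ?thesis unfolding Xeq using ih by simp
  qed
  ultimately show ?thesis unfolding C1_def by simp
qed

end


theorem theorem1:
  fixes \<mu> c0 :: real and Amax Smax :: nat
    and s :: "nat pmf" and a :: "real \<Rightarrow> nat pmf" and qbar :: "real \<Rightarrow> nat pmf"
  assumes mu_pos: "\<mu> > 0"
    and s_mean: "measure_pmf.expectation s (\<lambda>n. real n) = \<mu>"
    and s_bdd: "set_pmf s \<subseteq> {..Smax}"
    and a_mean: "\<And>\<epsilon>. 0 < \<epsilon> \<Longrightarrow> \<epsilon> < \<mu> \<Longrightarrow> measure_pmf.expectation (a \<epsilon>) (\<lambda>n. real n) = \<mu> - \<epsilon>"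
    and a_bdd: "\<And>\<epsilon>. 0 < \<epsilon> \<Longrightarrow> \<epsilon> < \<mu> \<Longrightarrow> set_pmf (a \<epsilon>) \<subseteq> {..Amax}"
    and c0_pos: "c0 > 0"
    and var_lb: "\<And>\<epsilon>. 0 < \<epsilon> \<Longrightarrow> \<epsilon> < \<mu> \<Longrightarrow>
       measure_pmf.variance (a \<epsilon>) (\<lambda>n. real n) + measure_pmf.variance s (\<lambda>n. real n) \<ge> c0"
    and stat: "\<And>\<epsilon>. 0 < \<epsilon> \<Longrightarrow> \<epsilon> < \<mu> \<Longrightarrow> stationary_queue (a \<epsilon>) s (qbar \<epsilon>)"
  shows "\<exists>K::real. \<forall>\<epsilon>. 0 < \<epsilon> \<and> \<epsilon> < \<mu> \<longrightarrow>
     wasserstein (distr (measure_pmf (qbar \<epsilon>)) borel (\<lambda>q. \<epsilon> * real q))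
       (density lborel (exponential_density
          (2 / (measure_pmf.variance (a \<epsilon>) (\<lambda>n. real n) + measure_pmf.variance s (\<lambda>n. real n)))))
     \<le> ereal (K * \<epsilon>)"
proof -
  define L :: nat where "L = Amax + Smax"
  define T where "T = 2 / c0"
  define K where "K = real Smax + (\<mu> + 3 * real L + 2) / 2 + (real L)^3 * (2 * T * exp (T * (\<mu> * real L)) + 2 * T)"
  show ?thesis
  proof (intro exI[of _ K] allI impI)
    fix \<epsilon> :: real assume e: "0 < \<epsilon> \<and> \<epsilon> < \<mu>"
    define V where "V = measure_pmf.variance (a \<epsilon>) (\<lambda>n. real n) + measure_pmf.variance s (\<lambda>n. real n)"
    define l where "l = 2 / V"
    have V0: "c0 \<le> V" unfolding V_def using var_lb e by auto
    have l0: "0 < l" unfolding l_def using V0 c0_pos by simp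
    have lT: "l \<le> T" unfolding l_def T_def using V0 c0_pos by (simp add: frac_le)
    have lV: "measure_pmf.variance (a \<epsilon>) real + measure_pmf.variance s real = 2 / l"
      unfolding l_def V_def[symmetric] using V0 c0_pos by simp
    interpret Q: Qc "a \<epsilon>" s "qbar \<epsilon>" \<epsilon> \<mu> Amax Smax
      by unfold_locales (use e stat a_bdd s_bdd a_mean s_mean in auto)
    have QL: "Q.L = L" unfolding Q.L_def L_def ..
    have DmL: "\<epsilon> * real Q.L \<le> \<mu> * real L" unfolding QL using e by (intro mult_right_mono) auto
    have bnd: "\<bar>(\<integral>x. h x \<partial>distr (measure_pmf (qbar \<epsilon>)) borel (\<lambda>q. \<epsilon> * real q))
                 - (\<integral>x. h x \<partial>density lborel (exponential_density l))\<bar> \<le> K * \<epsilon>"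
      if h: "lip1 h" for h
    proof -
      have hb: "h \<in> borel_measurable borel" by (rule lip1_borel[OF h])
      have i1: "(\<integral>x. h x \<partial>distr (measure_pmf (qbar \<epsilon>)) borel (\<lambda>q. \<epsilon> * real q)) = (\<integral>n. h (\<epsilon> * real n) \<partial>qbar \<epsilon>)"
        by (rule integral_distr) (auto simp: hb)
      have i2: "(\<integral>x. h x \<partial>density lborel (exponential_density l)) = Jx l h"
        unfolding Jx_def by (subst integral_density) (use l0 hb in \<open>auto simp: exponential_density_nonneg\<close>)
      have "\<bar>(\<integral>n. h (\<epsilon> * real n) \<partial>qbar \<epsilon>) - Jx l h\<bar>
          \<le> \<epsilon> * (real Smax + (\<mu> + 3 * real Q.L + 2) / 2 + (real Q.L)^3 * (2 * T * exp (T * (\<mu> * real L)) + 2 * T))"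
        by (rule Q.stein_main[OF l0 h lT lV DmL]) (use e in simp)
      then show ?thesis unfolding i1 i2 K_def QL by (simp add: mult.commute)
    qed
    show "wasserstein (distr (measure_pmf (qbar \<epsilon>)) borel (\<lambda>q. \<epsilon> * real q))
       (density lborel (exponential_density
          (2 / (measure_pmf.variance (a \<epsilon>) (\<lambda>n. real n) + measure_pmf.variance s (\<lambda>n. real n)))))
     \<le> ereal (K * \<epsilon>)"
      unfolding wasserstein_def V_def[symmetric] l_def[symmetric]
      by (rule SUP_least) (auto simp: lip1_def intro!: bnd)
  qed
qed


end
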